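(* Let $\phi:\mathcal S\times\mathcal A\times[0,1]\to\mathbb R$ be bounded and such that $\mathcal Q_\phi$ is well defined, and set $\overline\phi=\sup_{s,a,\tau}\phi(s,a,\tau)$, $\underline\phi=\inf_{s,a,\tau}\phi(s,a,\tau)$. Let $F_\infty^{-1}(\cdot;s,a)$ and $\underline F_\infty^{-1}(\cdot;s,a)$ be the quantile functions of the fixed points of $\mathcal T^\pi$ and of $\mathcal Q_\phi\mathcal T^\pi$, respectively. Then for all $(s,a)$ and $\tau$, $$F_\infty^{-1}(\tau;s,a)-\phi(s,a,\tau)-\frac{\gamma}{1-\gamma}\overline\phi\ \le\ \underline F^{-1}_\infty(\tau;s,a)\ \le\ F_\infty^{-1}(\tau;s,a)-\phi(s,a,\tau)-\frac{\gamma}{1-\gamma}\underline\phi.$$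
   Context: Setting: an infinite-horizon discounted MDP with finite state set $\mathcal S$, finite action set $\mathcal A$, transition kernel $\mathcal P(\cdot\mid s,a)$, bounded reward distributions $\mathcal R(s,a)$ on $\mathbb R$, discount $\gamma\in(0,1)$, and a policy $\pi$. For a distribution $\nu$ on $\mathbb R$, $F_\nu$ is its CDF and $F_\nu^{-1}(\tau)=\inf\{x:\tau\le F_\nu(x)\}$ its quantile function. The distributional Bellman operator on $\eta\in\mathscr P(\mathbb R)^{\mathcal S\times\mathcal A}$ is defined by $F_{\mathcal T^\pi\eta(s,a)}(z)=\sum_{s',a'}\mathcal P(s'\mid s,a)\pi(a'\mid s')\int F_{\eta(s',a')}\big(\tfrac{z-r}{\gamma}\big)\,dF_{\mathcal R(s,a)}(r)$. Quantile distortion operator: $\mathcal Q_\phi\eta$ is defined by $F^{-1}_{\mathcal Q_\phi\eta(s,a)}(\tau)=F^{-1}_{\eta(s,a)}(\tau)-\phi(s,a,\tau)$ (with $\phi$ such that this is again a quantile function). Both $\mathcal T^\pi$ and $\mathcal Q_\phi\mathcal T^\pi$ are $\gamma$-contractions in the supremum Wasserstein metric $\bar w_p(\eta,\eta')=\sup_{(s,a)}w_p(\eta(s,a),\eta'(s,a))$ on distributions with bounded support, so they have unique fixed points. *)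

theory Defs
  imports "HOL-Probability.Probability"
begin

definition quantile :: "(real \<Rightarrow> real) \<Rightarrow> real \<Rightarrow> real" where
  "quantile F \<tau> = Inf {x. \<tau> \<le> F x}"

definition bounded_dist :: "real measure \<Rightarrow> bool" where
  "bounded_dist \<nu> \<longleftrightarrow> real_distribution \<nu> \<and> (\<exists>B. measure \<nu> {-B..B} = 1)"

text \<open>Finite MDP data: transition kernel P s a s', policy pi s a, reward
  distributions R s a, discount gamma.\<close>
definition valid_mdp ::
  "('s::finite \<Rightarrow> 'a::finite \<Rightarrow> 's \<Rightarrow> real) \<Rightarrow> ('s \<Rightarrow> 'a \<Rightarrow> real) \<Rightarrow>
   ('s \<Rightarrow> 'a \<Rightarrow> real measure) \<Rightarrow> real \<Rightarrow> bool" where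
  "valid_mdp P \<pi> R \<gamma> \<longleftrightarrow>
     (\<forall>s a s'. 0 \<le> P s a s') \<and> (\<forall>s a. (\<Sum>s'\<in>UNIV. P s a s') = 1) \<and>
     (\<forall>s a. 0 \<le> \<pi> s a) \<and> (\<forall>s. (\<Sum>a\<in>UNIV. \<pi> s a) = 1) \<and>
     (\<forall>s a. real_distribution (R s a)) \<and>
     (\<exists>B. \<forall>s a. measure (R s a) {-B..B} = 1) \<and>
     0 < \<gamma> \<and> \<gamma> < 1"

definition bellman_cdf ::
  "('s::finite \<Rightarrow> 'a::finite \<Rightarrow> 's \<Rightarrow> real) \<Rightarrow> ('s \<Rightarrow> 'a \<Rightarrow> real) \<Rightarrow>
   ('s \<Rightarrow> 'a \<Rightarrow> real measure) \<Rightarrow> real \<Rightarrow> ('s \<Rightarrow> 'a \<Rightarrow> real measure) \<Rightarrow>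
   's \<Rightarrow> 'a \<Rightarrow> real \<Rightarrow> real" where
  "bellman_cdf P \<pi> R \<gamma> \<eta> s a z =
     (\<Sum>s'\<in>UNIV. \<Sum>a'\<in>UNIV. P s a s' * \<pi> s' a' *
        integral\<^sup>L (R s a) (\<lambda>r. cdf (\<eta> s' a') ((z - r) / \<gamma>)))"

definition qdist_well_defined :: "('s \<Rightarrow> 'a \<Rightarrow> real \<Rightarrow> real) \<Rightarrow> bool" where
  "qdist_well_defined \<phi> \<longleftrightarrow>
     (\<forall>s a \<nu>. bounded_dist \<nu> \<longrightarrow>
        (\<exists>\<nu>'. real_distribution \<nu>' \<and>
           (\<forall>\<tau>\<in>{0<..<1}. quantile (cdf \<nu>') \<tau> = quantile (cdf \<nu>) \<tau> - \<phi> s a \<tau>)))"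

definition is_fixpoint_T where
  "is_fixpoint_T P \<pi> R \<gamma> \<eta> \<longleftrightarrow>
     (\<forall>s a. bounded_dist (\<eta> s a)) \<and>
     (\<forall>s a z. cdf (\<eta> s a) z = bellman_cdf P \<pi> R \<gamma> \<eta> s a z)"

definition is_fixpoint_QT where
  "is_fixpoint_QT P \<pi> R \<gamma> \<phi> \<eta> \<longleftrightarrow>
     (\<forall>s a. bounded_dist (\<eta> s a)) \<and>
     (\<forall>s a. \<forall>\<tau>\<in>{0<..<1}.
        quantile (cdf (\<eta> s a)) \<tau> = quantile (bellman_cdf P \<pi> R \<gamma> \<eta> s a) \<tau> - \<phi> s a \<tau>)"

end

theory Submission
  imports Defs
begin


lemma cdf_tails:
  assumes M: "real_distribution M" and B: "measure M {-B..B} = 1"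
  shows "B \<le> x \<Longrightarrow> cdf M x = 1" and "x < -B \<Longrightarrow> cdf M x = 0"
proof -
  interpret real_distribution M by fact
  show "B \<le> x \<Longrightarrow> cdf M x = 1"
  proof -
    assume "B \<le> x"
    hence "measure M {-B..B} \<le> measure M {..x}"
      by (intro finite_measure_mono) auto
    thus ?thesis using B cdf_bounded_prob[of x] unfolding cdf_def2 by linarith
  qed
  show "x < -B \<Longrightarrow> cdf M x = 0"
  proof -
    assume "x < -B"
    hence "{..x} \<subseteq> UNIV - {-B..B}" by auto
    hence "measure M {..x} \<le> measure M (UNIV - {-B..B})"
      by (intro finite_measure_mono) auto
    also have "\<dots> = 0" using B prob_compl[of "{-B..B}"] by simp
    finally show ?thesis using cdf_nonneg[of x] unfolding cdf_def2 by linarith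
  qed
qed

lemma quantile_galois:
  assumes M: "real_distribution M" and B: "measure M {-B..B} = 1"
    and t: "0 < \<tau>" "\<tau> < 1"
  shows "quantile (cdf M) \<tau> \<le> x \<longleftrightarrow> \<tau> \<le> cdf M x"
proof -
  interpret real_distribution M by fact
  let ?S = "{x. \<tau> \<le> cdf M x}"
  have ne: "B \<in> ?S" using cdf_tails(1)[OF M B, of B] t by simp
  have bdd: "bdd_below ?S"
  proof
    fix y assume "y \<in> ?S"
    thus "-B \<le> y" using cdf_tails(2)[OF M B, of y] t by (cases "y < -B") auto
  qed
  show ?thesis
  proof
    assume "\<tau> \<le> cdf M x"
    thus "quantile (cdf M) \<tau> \<le> x" unfolding quantile_def using bdd by (auto intro: cInf_lower)
  next
    assume q: "quantile (cdf M) \<tau> \<le> x"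
    show "\<tau> \<le> cdf M x"
    proof (rule ccontr)
      assume "\<not> \<tau> \<le> cdf M x"
      hence lt: "cdf M x < \<tau>" by simp
      have "\<forall>\<^sub>F y in at_right x. cdf M y < \<tau>"
        using cdf_is_right_cont[of x] lt unfolding continuous_within
        by (rule order_tendstoD)
      then obtain b where b: "b > x" "\<And>y. x < y \<Longrightarrow> y < b \<Longrightarrow> cdf M y < \<tau>"
        unfolding eventually_at_right_field by auto
      define e where "e = (x + b) / 2"
      have e: "x < e" "e < b" using b(1) by (auto simp: e_def)
      have "\<forall>y\<in>?S. e \<le> y"
      proof
        fix y assume y: "y \<in> ?S"
        show "e \<le> y"
        proof (rule ccontr)
          assume "\<not> e \<le> y"
          hence "cdf M y \<le> cdf M e" by (intro cdf_nondecreasing) auto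
          thus False using b(2)[OF e] y by simp
        qed
      qed
      hence "e \<le> Inf ?S" using ne by (intro cInf_greatest) auto
      thus False using q e unfolding quantile_def by simp
    qed
  qed
qed

lemma quantile_range:
  assumes M: "real_distribution M" and B: "measure M {-B..B} = 1"
    and t: "0 < \<tau>" "\<tau> < 1"
  shows "\<bar>quantile (cdf M) \<tau>\<bar> \<le> \<bar>B\<bar>"
proof -
  have 1: "quantile (cdf M) \<tau> \<le> B"
    using quantile_galois[OF M B t] cdf_tails(1)[OF M B, of B] t by simp
  have 2: "\<not> quantile (cdf M) \<tau> \<le> x" if "x < -B" for x
    using quantile_galois[OF M B t] cdf_tails(2)[OF M B that] t by simp
  have "-B \<le> quantile (cdf M) \<tau>"
  proof (rule ccontr)
    assume "\<not> -B \<le> quantile (cdf M) \<tau>"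
    thus False using 2[of "(quantile (cdf M) \<tau> - B) / 2"] by simp
  qed
  thus ?thesis using 1 by linarith
qed



lemma uniform_bound:
  fixes \<zeta> :: "'s::finite \<Rightarrow> 'a::finite \<Rightarrow> real measure"
  assumes "\<forall>s a. bounded_dist (\<zeta> s a)"
  shows "\<exists>B. \<forall>s a. measure (\<zeta> s a) {-B..B} = 1"
proof -
  from assms obtain Bf where Bf: "\<And>s a. measure (\<zeta> s a) {-Bf s a..Bf s a} = 1"
    unfolding bounded_dist_def by metis
  define B where "B = Max (range (\<lambda>(s,a). \<bar>Bf s a\<bar>))"
  have le: "\<bar>Bf s a\<bar> \<le> B" for s a
    unfolding B_def by (rule Max_ge) auto
  show ?thesis
  proof (intro exI allI)
    fix s a
    interpret real_distribution "\<zeta> s a" using assms unfolding bounded_dist_def by auto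
    have "measure (\<zeta> s a) {-Bf s a..Bf s a} \<le> measure (\<zeta> s a) {-B..B}"
      using le[of s a] by (intro finite_measure_mono) auto
    thus "measure (\<zeta> s a) {-B..B} = 1" using Bf[of s a] prob_le_1[of "{-B..B}"] by linarith
  qed
qed

lemma cdf_integrable:
  assumes "real_distribution M" "real_distribution N" "0 < \<gamma>"
  shows "integrable M (\<lambda>r. cdf N ((z - r) / \<gamma>))"
proof -
  interpret M: real_distribution M by fact
  interpret N: real_distribution N by fact
  have m: "cdf N \<in> borel_measurable borel"
    by (rule borel_measurable_mono) (auto simp: mono_def N.cdf_nondecreasing)
  have "(\<lambda>r. cdf N ((z - r) / \<gamma>)) \<in> borel_measurable M"
    using measurable_compose[OF _ m, of "\<lambda>r. (z - r) / \<gamma>" M] by simp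
  moreover have "AE r in M. norm (cdf N ((z - r) / \<gamma>)) \<le> 1"
    using N.cdf_nonneg N.cdf_bounded_prob by auto
  ultimately show ?thesis by (intro M.integrable_const_bound) auto
qed

lemma bellman_mono:
  assumes mdp: "valid_mdp P \<pi> R \<gamma>"
    and d1: "\<forall>s a. real_distribution (\<zeta>1 s a)" and d2: "\<forall>s a. real_distribution (\<zeta>2 s a)"
    and le: "\<forall>s a x. cdf (\<zeta>1 s a) x \<le> cdf (\<zeta>2 s a) (x + k)"
  shows "bellman_cdf P \<pi> R \<gamma> \<zeta>1 s a z \<le> bellman_cdf P \<pi> R \<gamma> \<zeta>2 s a (z + \<gamma> * k)"
proof -
  have g: "0 < \<gamma>" and R: "real_distribution (R s a)" and Pp: "\<And>s a s'. 0 \<le> P s a s'"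
    and pp: "\<And>s a. 0 \<le> \<pi> s a"
    using mdp unfolding valid_mdp_def by auto
  have eq: "(z + \<gamma> * k - r) / \<gamma> = (z - r) / \<gamma> + k" for r using g by (simp add: field_simps)
  show ?thesis unfolding bellman_cdf_def eq
  proof (intro sum_mono mult_left_mono integral_mono)
    fix s' a'
    show "integrable (R s a) (\<lambda>r. cdf (\<zeta>1 s' a') ((z - r) / \<gamma>))"
      using cdf_integrable[OF R _ g] d1 by auto
    have "integrable (R s a) (\<lambda>r. cdf (\<zeta>2 s' a') ((z + \<gamma> * k - r) / \<gamma>))"
      using cdf_integrable[OF R _ g] d2 by auto
    thus "integrable (R s a) (\<lambda>r. cdf (\<zeta>2 s' a') ((z - r) / \<gamma> + k))" unfolding eq .
    show "0 \<le> P s a s' * \<pi> s' a'" using Pp pp by simp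
  qed (use le in auto)
qed

lemma bellman_tails:
  fixes \<zeta> :: "'s::finite \<Rightarrow> 'a::finite \<Rightarrow> real measure"
  assumes mdp: "valid_mdp P \<pi> R \<gamma>" and bd: "\<forall>s a. bounded_dist (\<zeta> s a)"
  shows "\<exists>Z1 Z0. (\<forall>s a z. Z1 \<le> z \<longrightarrow> bellman_cdf P \<pi> R \<gamma> \<zeta> s a z = 1)
              \<and> (\<forall>s a z. z < Z0 \<longrightarrow> bellman_cdf P \<pi> R \<gamma> \<zeta> s a z = 0)"
proof -
  obtain B1 where B1: "\<And>s a. measure (\<zeta> s a) {-B1..B1} = 1" using uniform_bound[OF bd] by blast
  obtain B where B: "\<And>s a. measure (R s a) {-B..B} = 1" using mdp unfolding valid_mdp_def by blast
  have g: "0 < \<gamma>" and R: "\<And>s a. real_distribution (R s a)"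
    and sP: "\<And>s a. (\<Sum>s'\<in>UNIV. P s a s') = 1" and spi: "\<And>s. (\<Sum>a\<in>UNIV. \<pi> s a) = 1"
    using mdp unfolding valid_mdp_def by auto
  have dz: "\<And>s a. real_distribution (\<zeta> s a)" using bd unfolding bounded_dist_def by auto
  have AE: "AE r in R s a. r \<in> {-B..B}" for s a
  proof -
    interpret real_distribution "R s a" by (rule R)
    show ?thesis using B[of s a] by (intro AE_prob_1) auto
  qed
  have tot: "(\<Sum>s'\<in>UNIV. \<Sum>a'\<in>UNIV. P s a s' * \<pi> s' a' * c) = c" for s a c
    by (simp add: sum_distrib_left[symmetric] sum_distrib_right[symmetric] spi sP mult.assoc)
  show ?thesis
  proof (intro exI conjI allI impI)
    fix s a z assume z: "\<gamma> * \<bar>B1\<bar> + \<bar>B\<bar> \<le> z"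
    interpret real_distribution "R s a" by (rule R)
    have "integral\<^sup>L (R s a) (\<lambda>r. cdf (\<zeta> s' a') ((z - r) / \<gamma>)) = integral\<^sup>L (R s a) (\<lambda>r. 1)" for s' a'
    proof (rule integral_cong_AE)
      show "AE r in R s a. cdf (\<zeta> s' a') ((z - r) / \<gamma>) = 1"
        using AE[of s a]
      proof eventually_elim
        case (elim r)
        have "\<gamma> * B1 \<le> \<gamma> * \<bar>B1\<bar>" using g by (intro mult_left_mono) auto
        hence "\<gamma> * B1 \<le> z - r" using elim z by auto
        hence "B1 \<le> (z - r) / \<gamma>" using g by (simp add: field_simps)
        thus ?case using cdf_tails(1)[OF dz B1] by simp
      qed
    qed (auto intro: borel_measurable_integrable cdf_integrable[OF R dz g])
    moreover have m1: "measure (R s a) UNIV = 1" using prob_space by simp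
    ultimately show "bellman_cdf P \<pi> R \<gamma> \<zeta> s a z = 1" unfolding bellman_cdf_def using tot[of s a 1] by simp
  next
    fix s a z assume z: "z < - \<gamma> * \<bar>B1\<bar> - \<bar>B\<bar>"
    interpret real_distribution "R s a" by (rule R)
    have "integral\<^sup>L (R s a) (\<lambda>r. cdf (\<zeta> s' a') ((z - r) / \<gamma>)) = integral\<^sup>L (R s a) (\<lambda>r. 0)" for s' a'
    proof (rule integral_cong_AE)
      show "AE r in R s a. cdf (\<zeta> s' a') ((z - r) / \<gamma>) = 0"
        using AE[of s a]
      proof eventually_elim
        case (elim r)
        have "\<gamma> * B1 \<le> \<gamma> * \<bar>B1\<bar>" using g by (intro mult_left_mono) auto
        hence "z - r < - (\<gamma> * B1)" using elim z by auto
        hence "(z - r) / \<gamma> < - B1" using g by (simp add: field_simps)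
        thus ?case using cdf_tails(2)[OF dz B1] by simp
      qed
    qed (auto intro: borel_measurable_integrable cdf_integrable[OF R dz g])
    thus "bellman_cdf P \<pi> R \<gamma> \<zeta> s a z = 0" unfolding bellman_cdf_def by simp
  qed
qed



lemma cdf_from_quantile:
  assumes A: "real_distribution A" "measure A {-BA..BA} = 1"
    and Bd: "real_distribution Bm" "measure Bm {-BB..BB} = 1"
    and q: "\<forall>t\<in>{0<..<1}. quantile (cdf A) t \<le> quantile (cdf Bm) t + m"
  shows "cdf Bm x \<le> cdf A (x + m)"
proof (rule ccontr)
  assume "\<not> ?thesis"
  hence lt: "cdf A (x + m) < cdf Bm x" by simp
  define t where "t = (cdf A (x + m) + cdf Bm x) / 2"
  interpret A: real_distribution A by fact
  interpret B: real_distribution Bm by fact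
  have "0 \<le> cdf A (x + m)" using A.cdf_nonneg by blast
  moreover have "cdf Bm x \<le> 1" using B.cdf_bounded_prob by blast
  ultimately have t: "0 < t" "t < 1" "cdf A (x + m) < t" "t < cdf Bm x" using lt by (auto simp: t_def)
  have "quantile (cdf Bm) t \<le> x" using quantile_galois[OF Bd t(1,2)] t by simp
  moreover have "\<not> quantile (cdf A) t \<le> x + m" using quantile_galois[OF A t(1,2)] t by simp
  moreover have "quantile (cdf A) t \<le> quantile (cdf Bm) t + m" using q t by auto
  ultimately show False by simp
qed

theorem theorem3:
  fixes P :: "'s::finite \<Rightarrow> 'a::finite \<Rightarrow> 's \<Rightarrow> real"
    and \<pi> :: "'s \<Rightarrow> 'a \<Rightarrow> real"
    and R :: "'s \<Rightarrow> 'a \<Rightarrow> real measure"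
    and \<gamma> :: real
    and \<phi> :: "'s \<Rightarrow> 'a \<Rightarrow> real \<Rightarrow> real"
    and \<eta> \<eta>' :: "'s \<Rightarrow> 'a \<Rightarrow> real measure"
  assumes mdp: "valid_mdp P \<pi> R \<gamma>"
    and phi_bdd: "\<exists>C. \<forall>s a. \<forall>\<tau>\<in>{0..1}. \<bar>\<phi> s a \<tau>\<bar> \<le> C"
    and phi_wd: "qdist_well_defined \<phi>"
    and fixT: "is_fixpoint_T P \<pi> R \<gamma> \<eta>"
    and fixQT: "is_fixpoint_QT P \<pi> R \<gamma> \<phi> \<eta>'"
    and tau: "\<tau> \<in> {0<..<1}"
  shows "quantile (cdf (\<eta> s a)) \<tau> - \<phi> s a \<tau>
           - \<gamma> / (1 - \<gamma>) * (SUP x\<in>UNIV \<times> UNIV \<times> {0..1}. \<phi> (fst x) (fst (snd x)) (snd (snd x)))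
         \<le> quantile (cdf (\<eta>' s a)) \<tau>
       \<and> quantile (cdf (\<eta>' s a)) \<tau>
         \<le> quantile (cdf (\<eta> s a)) \<tau> - \<phi> s a \<tau>
           - \<gamma> / (1 - \<gamma>) * (INF x\<in>UNIV \<times> UNIV \<times> {0..1}. \<phi> (fst x) (fst (snd x)) (snd (snd x)))"
proof -
  have g: "0 < \<gamma>" "\<gamma> < 1" using mdp unfolding valid_mdp_def by auto
  have bdG: "\<forall>s a. bounded_dist (\<eta> s a)" and Gfix: "\<And>s a z. cdf (\<eta> s a) z = bellman_cdf P \<pi> R \<gamma> \<eta> s a z"
    using fixT unfolding is_fixpoint_T_def by auto
  have bdH: "\<forall>s a. bounded_dist (\<eta>' s a)"
    and Hfix: "\<And>s a t. t \<in> {0<..<1} \<Longrightarrow> quantile (cdf (\<eta>' s a)) t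
        = quantile (bellman_cdf P \<pi> R \<gamma> \<eta>' s a) t - \<phi> s a t"
    using fixQT unfolding is_fixpoint_QT_def by auto
  have dG: "\<forall>s a. real_distribution (\<eta> s a)" using bdG unfolding bounded_dist_def by auto
  have dH: "\<forall>s a. real_distribution (\<eta>' s a)" using bdH unfolding bounded_dist_def by auto
  obtain BG where BG: "\<And>s a. measure (\<eta> s a) {-BG..BG} = 1" using uniform_bound[OF bdG] by blast
  obtain BH where BH: "\<And>s a. measure (\<eta>' s a) {-BH..BH} = 1" using uniform_bound[OF bdH] by blast
  obtain Z1 Z0 where Z1: "\<And>s a z. Z1 \<le> z \<Longrightarrow> bellman_cdf P \<pi> R \<gamma> \<eta>' s a z = 1"
    and Z0: "\<And>s a z. z < Z0 \<Longrightarrow> bellman_cdf P \<pi> R \<gamma> \<eta>' s a z = 0"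
    using bellman_tails[OF mdp bdH] by blast
  define qG where "qG s a t = quantile (cdf (\<eta> s a)) t" for s a t
  define qH where "qH s a t = quantile (cdf (\<eta>' s a)) t" for s a t
  have galG: "qG s a t \<le> x \<longleftrightarrow> t \<le> cdf (\<eta> s a) x" if "t \<in> {0<..<1}" for s a t x
    unfolding qG_def using quantile_galois[of "\<eta> s a" BG t x] dG BG that by auto
  have rG: "\<bar>qG s a t\<bar> \<le> \<bar>BG\<bar>" if "t \<in> {0<..<1}" for s a t
    unfolding qG_def using quantile_range[of "\<eta> s a" BG t] dG BG that by auto
  have rH: "\<bar>qH s a t\<bar> \<le> \<bar>BH\<bar>" if "t \<in> {0<..<1}" for s a t
    unfolding qH_def using quantile_range[of "\<eta>' s a" BH t] dH BH that by auto
  obtain C where C: "\<And>s a t. t \<in> {0..1} \<Longrightarrow> \<bar>\<phi> s a t\<bar> \<le> C" using phi_bdd by blast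
  define Ps where "Ps = (SUP x\<in>UNIV \<times> UNIV \<times> {0..1}. \<phi> (fst x) (fst (snd x)) (snd (snd x)))"
  define Pi where "Pi = (INF x\<in>UNIV \<times> UNIV \<times> {0..1}. \<phi> (fst x) (fst (snd x)) (snd (snd x)))"
  have C1: "\<phi> s a t \<le> C" "-C \<le> \<phi> s a t" if "t \<in> {0..1}" for s a t
    using C[OF that, of s a] by auto
  have phi_le: "\<phi> s a t \<le> Ps" if "t \<in> {0..1}" for s a t
  proof -
    have bd: "bdd_above ((\<lambda>x. \<phi> (fst x) (fst (snd x)) (snd (snd x))) ` (UNIV \<times> UNIV \<times> {0..1}))"
      by (rule bdd_aboveI[of _ C]) (use C1 in auto)
    have mem: "(s,a,t) \<in> UNIV \<times> UNIV \<times> {0..1}" using that by simp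
    show ?thesis using cSUP_upper[OF mem bd] unfolding Ps_def by simp
  qed
  have phi_ge: "Pi \<le> \<phi> s a t" if "t \<in> {0..1}" for s a t
  proof -
    have bd: "bdd_below ((\<lambda>x. \<phi> (fst x) (fst (snd x)) (snd (snd x))) ` (UNIV \<times> UNIV \<times> {0..1}))"
      by (rule bdd_belowI[of _ "-C"]) (use C1 in auto)
    have mem: "(s,a,t) \<in> UNIV \<times> UNIV \<times> {0..1}" using that by simp
    show ?thesis using cINF_lower[OF bd mem] unfolding Pi_def by simp
  qed
  have lowerQ: "qG s a t - \<gamma> * k - \<phi> s a t \<le> qH s a t"
    if le: "\<forall>s a x. cdf (\<eta>' s a) x \<le> cdf (\<eta> s a) (x + k)" and t: "t \<in> {0<..<1}" for k s a t
  proof -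
    have T: "bellman_cdf P \<pi> R \<gamma> \<eta>' s a z \<le> cdf (\<eta> s a) (z + \<gamma> * k)" for z
      using bellman_mono[OF mdp dH dG le] Gfix by simp
    let ?S = "{x. t \<le> bellman_cdf P \<pi> R \<gamma> \<eta>' s a x}"
    have "Z1 \<in> ?S" using Z1[of Z1 s a] t by simp
    hence "qG s a t - \<gamma> * k \<le> Inf ?S"
    proof (intro cInf_greatest)
      fix x assume "x \<in> ?S"
      hence "t \<le> cdf (\<eta> s a) (x + \<gamma> * k)" using T[of x] by simp
      hence "qG s a t \<le> x + \<gamma> * k" using galG[OF t] by blast
      thus "qG s a t - \<gamma> * k \<le> x" by simp
    qed auto
    thus ?thesis using Hfix[OF t, of s a] unfolding qH_def quantile_def by simp
  qed
  have upperQ: "qH s a t \<le> qG s a t - \<gamma> * k - \<phi> s a t"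
    if le: "\<forall>s a x. cdf (\<eta> s a) x \<le> cdf (\<eta>' s a) (x + - k)" and t: "t \<in> {0<..<1}" for k s a t
  proof -
    have T: "cdf (\<eta> s a) z \<le> bellman_cdf P \<pi> R \<gamma> \<eta>' s a (z + \<gamma> * - k)" for z
      using bellman_mono[OF mdp dG dH le] Gfix by simp
    let ?S = "{x. t \<le> bellman_cdf P \<pi> R \<gamma> \<eta>' s a x}"
    have "t \<le> cdf (\<eta> s a) (qG s a t)" using galG[OF t, of s a "qG s a t"] by simp
    hence "qG s a t - \<gamma> * k \<in> ?S" using T[of "qG s a t"] by simp
    moreover have "bdd_below ?S"
    proof (rule bdd_belowI[of _ Z0])
      fix x assume "x \<in> ?S"
      thus "Z0 \<le> x" using Z0[of x s a] t by (cases "x < Z0") auto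
    qed
    ultimately have "Inf ?S \<le> qG s a t - \<gamma> * k" by (rule cInf_lower)
    thus ?thesis using Hfix[OF t, of s a] unfolding qH_def quantile_def by simp
  qed
  have t01: "\<tau> \<in> {0..1}" using tau by auto
  have part1: "qG s a \<tau> - \<phi> s a \<tau> - \<gamma> / (1 - \<gamma>) * Ps \<le> qH s a \<tau>"
  proof -
    define c where "c = Ps / (1 - \<gamma>)"
    define D where "D = (\<lambda>(s,a,t). qG s a t - c - qH s a t) ` (UNIV \<times> UNIV \<times> {0<..<1::real})"
    define \<delta> where "\<delta> = Sup D"
    have bD: "bdd_above D"
    proof (rule bdd_aboveI[of _ "\<bar>BG\<bar> + \<bar>c\<bar> + \<bar>BH\<bar>"])
      fix y assume "y \<in> D"
      then obtain s a t where t: "t \<in> {0<..<1}" and y: "y = qG s a t - c - qH s a t"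
        unfolding D_def by auto
      show "y \<le> \<bar>BG\<bar> + \<bar>c\<bar> + \<bar>BH\<bar>" using rG[OF t, of s a] rH[OF t, of s a] y
        by (auto simp: abs_le_iff)
    qed
    have inD: "qG s a t - c - qH s a t \<in> D" if "t \<in> {0<..<1}" for s a t
      unfolding D_def using that by force
    have le\<delta>: "qG s a t - c - qH s a t \<le> \<delta>" if "t \<in> {0<..<1}" for s a t
      unfolding \<delta>_def using cSup_upper[OF inD[OF that] bD] .
    have cdfle: "\<forall>s a x. cdf (\<eta>' s a) x \<le> cdf (\<eta> s a) (x + (c + \<delta>))"
    proof (intro allI)
      fix s a x
      show "cdf (\<eta>' s a) x \<le> cdf (\<eta> s a) (x + (c + \<delta>))"
      proof (rule cdf_from_quantile[of _ BG _ BH])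
        show "\<forall>t\<in>{0<..<1}. quantile (cdf (\<eta> s a)) t \<le> quantile (cdf (\<eta>' s a)) t + (c + \<delta>)"
        proof
          fix t :: real assume t: "t \<in> {0<..<1}"
          show "quantile (cdf (\<eta> s a)) t \<le> quantile (cdf (\<eta>' s a)) t + (c + \<delta>)"
            using le\<delta>[OF t, of s a] unfolding qG_def qH_def by simp
        qed
      qed (use dG BG dH BH in auto)
    qed
    have cc: "\<gamma> * c + Ps = c" using g by (simp add: c_def field_simps)
    have "x \<le> \<gamma> * \<delta>" if "x \<in> D" for x
    proof -
      from that obtain s a t where t: "t \<in> {0<..<1}" and x: "x = qG s a t - c - qH s a t"
        unfolding D_def by auto
      have "qG s a t - \<gamma> * (c + \<delta>) - \<phi> s a t \<le> qH s a t" using lowerQ[OF cdfle t] .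
      moreover have "\<phi> s a t \<le> Ps" using phi_le t by auto
      ultimately show ?thesis using x cc by (simp add: algebra_simps)
    qed
    moreover have "D \<noteq> {}" using inD[of "1/2"] by auto
    ultimately have "\<delta> \<le> \<gamma> * \<delta>" unfolding \<delta>_def by (intro cSup_least) auto
    hence "\<delta> \<le> 0" using g by (smt (verit) mult_less_cancel_right2)
    hence "\<gamma> * \<delta> \<le> 0" using g by (simp add: mult_nonneg_nonpos)
    moreover have "qG s a \<tau> - \<gamma> * (c + \<delta>) - \<phi> s a \<tau> \<le> qH s a \<tau>" using lowerQ[OF cdfle tau] .
    moreover have "\<gamma> / (1 - \<gamma>) * Ps = \<gamma> * c" by (simp add: c_def)
    ultimately show ?thesis by (simp add: algebra_simps)
  qed
  have part2: "qH s a \<tau> \<le> qG s a \<tau> - \<phi> s a \<tau> - \<gamma> / (1 - \<gamma>) * Pi"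
  proof -
    define c where "c = Pi / (1 - \<gamma>)"
    define D where "D = (\<lambda>(s,a,t). qH s a t - qG s a t + c) ` (UNIV \<times> UNIV \<times> {0<..<1::real})"
    define \<delta> where "\<delta> = Sup D"
    have bD: "bdd_above D"
    proof (rule bdd_aboveI[of _ "\<bar>BG\<bar> + \<bar>c\<bar> + \<bar>BH\<bar>"])
      fix y assume "y \<in> D"
      then obtain s a t where t: "t \<in> {0<..<1}" and y: "y = qH s a t - qG s a t + c"
        unfolding D_def by auto
      show "y \<le> \<bar>BG\<bar> + \<bar>c\<bar> + \<bar>BH\<bar>" using rG[OF t, of s a] rH[OF t, of s a] y
        by (auto simp: abs_le_iff)
    qed
    have inD: "qH s a t - qG s a t + c \<in> D" if "t \<in> {0<..<1}" for s a t
      unfolding D_def using that by force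
    have le\<delta>: "qH s a t - qG s a t + c \<le> \<delta>" if "t \<in> {0<..<1}" for s a t
      unfolding \<delta>_def using cSup_upper[OF inD[OF that] bD] .
    have cdfle: "\<forall>s a x. cdf (\<eta> s a) x \<le> cdf (\<eta>' s a) (x + - (c - \<delta>))"
    proof (intro allI)
      fix s a x
      show "cdf (\<eta> s a) x \<le> cdf (\<eta>' s a) (x + - (c - \<delta>))"
      proof (rule cdf_from_quantile[of _ BH _ BG])
        show "\<forall>t\<in>{0<..<1}. quantile (cdf (\<eta>' s a)) t \<le> quantile (cdf (\<eta> s a)) t + - (c - \<delta>)"
        proof
          fix t :: real assume t: "t \<in> {0<..<1}"
          show "quantile (cdf (\<eta>' s a)) t \<le> quantile (cdf (\<eta> s a)) t + - (c - \<delta>)"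
            using le\<delta>[OF t, of s a] unfolding qG_def qH_def by simp
        qed
      qed (use dG BG dH BH in auto)
    qed
    have cc: "\<gamma> * c + Pi = c" using g by (simp add: c_def field_simps)
    have "x \<le> \<gamma> * \<delta>" if "x \<in> D" for x
    proof -
      from that obtain s a t where t: "t \<in> {0<..<1}" and x: "x = qH s a t - qG s a t + c"
        unfolding D_def by auto
      have "qH s a t \<le> qG s a t - \<gamma> * (c - \<delta>) - \<phi> s a t" using upperQ[OF cdfle t] .
      moreover have "Pi \<le> \<phi> s a t" using phi_ge t by auto
      ultimately show ?thesis using x cc by (simp add: algebra_simps)
    qed
    moreover have "D \<noteq> {}" using inD[of "1/2"] by auto
    ultimately have "\<delta> \<le> \<gamma> * \<delta>" unfolding \<delta>_def by (intro cSup_least) auto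
    hence "\<delta> \<le> 0" using g by (smt (verit) mult_less_cancel_right2)
    hence "\<gamma> * \<delta> \<le> 0" using g by (simp add: mult_nonneg_nonpos)
    moreover have "qH s a \<tau> \<le> qG s a \<tau> - \<gamma> * (c - \<delta>) - \<phi> s a \<tau>" using upperQ[OF cdfle tau] .
    moreover have "\<gamma> / (1 - \<gamma>) * Pi = \<gamma> * c" by (simp add: c_def)
    ultimately show ?thesis by (simp add: algebra_simps)
  qed
  show ?thesis using part1 part2 unfolding qG_def qH_def Ps_def Pi_def by simp
qed

end
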